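(* Let $R$ be a finite ring with identity, $\alpha\in(0,1)$, $Q$ a probability distribution on $R$ constant on similarity classes, and $(X_t)$ the Markov chain defined below. Then for every fixed $\epsilon<1/2$ (with $\epsilon>0$), the mixing time satisfies \[t_{\mathrm{mix}}(\epsilon)\le\frac{\log\epsilon}{\log(1-\alpha)}+1.\]
   Context: $a,b$ are similar if $b=uau^{-1}$ for some unit $u$ of $R$. The Markov chain $(X_t)$ on $R$: at each step an independent coin with Heads probability $\alpha$ is tossed; on Heads, $X_{t+1}=X_t+Y$ with $Y$ uniform on $R$; on Tails, $X_{t+1}=Z\cdot X_t$ with $Z$ drawn from $Q$ (all independent). Let $M_R$ be its transition matrix and $\pi$ its stationary distribution. The total variation distance is $\|\mu-\nu\|_{TV}=\frac12\sum_{x}|\mu(x)-\nu(x)|$, $d(t)=\max_{x\in R}\|M_R^t(x,\cdot)-\pi\|_{TV}$, and $t_{\mathrm{mix}}(\epsilon)=\min\{t\mid d(t)\le\epsilon\}$. *)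

theory Defs
  imports Complex_Main "HOL-Library.Cardinality"
begin

definition ring_unit :: "'a::ring_1 \<Rightarrow> bool" where
  "ring_unit u \<longleftrightarrow> (\<exists>v. u * v = 1 \<and> v * u = 1)"

definition similar :: "'a::ring_1 \<Rightarrow> 'a \<Rightarrow> bool" where
  "similar a b \<longleftrightarrow> (\<exists>u v. u * v = 1 \<and> v * u = 1 \<and> b = u * a * v)"

text \<open>Transition matrix of the chain: with prob. alpha add a uniform element,
  with prob. 1 - alpha multiply on the left by Z drawn from Q.\<close>

definition trans_mat :: "real \<Rightarrow> ('a::{ring_1,finite} \<Rightarrow> real) \<Rightarrow> 'a \<Rightarrow> 'a \<Rightarrow> real" where
  "trans_mat \<alpha> Q x y = \<alpha> / real CARD('a) + (1 - \<alpha>) * (\<Sum>z\<in>{z. z * x = y}. Q z)"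

fun mat_pow :: "('a::finite \<Rightarrow> 'a \<Rightarrow> real) \<Rightarrow> nat \<Rightarrow> 'a \<Rightarrow> 'a \<Rightarrow> real" where
  "mat_pow M 0 x y = (if x = y then 1 else 0)"
| "mat_pow M (Suc t) x y = (\<Sum>z\<in>UNIV. mat_pow M t x z * M z y)"

definition prob_dist :: "('a::finite \<Rightarrow> real) \<Rightarrow> bool" where
  "prob_dist p \<longleftrightarrow> (\<forall>x. p x \<ge> 0) \<and> (\<Sum>x\<in>UNIV. p x) = 1"

definition stationary :: "('a::finite \<Rightarrow> 'a \<Rightarrow> real) \<Rightarrow> ('a \<Rightarrow> real) \<Rightarrow> bool" where
  "stationary M \<pi> \<longleftrightarrow> prob_dist \<pi> \<and> (\<forall>y. (\<Sum>x\<in>UNIV. \<pi> x * M x y) = \<pi> y)"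

definition tv_dist :: "('a::finite \<Rightarrow> real) \<Rightarrow> ('a \<Rightarrow> real) \<Rightarrow> real" where
  "tv_dist \<mu> \<nu> = (1/2) * (\<Sum>x\<in>UNIV. \<bar>\<mu> x - \<nu> x\<bar>)"

definition dist_t :: "('a::finite \<Rightarrow> 'a \<Rightarrow> real) \<Rightarrow> ('a \<Rightarrow> real) \<Rightarrow> nat \<Rightarrow> real" where
  "dist_t M \<pi> t = Max (range (\<lambda>x. tv_dist (mat_pow M t x) \<pi>))"

definition t_mix :: "('a::finite \<Rightarrow> 'a \<Rightarrow> real) \<Rightarrow> ('a \<Rightarrow> real) \<Rightarrow> real \<Rightarrow> nat" where
  "t_mix M \<pi> \<epsilon> = (LEAST t. dist_t M \<pi> t \<le> \<epsilon>)"

end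

theory Submission
  imports Defs
begin

definition Kmat :: "('a::{ring_1,finite} \<Rightarrow> real) \<Rightarrow> 'a \<Rightarrow> 'a \<Rightarrow> real" where
  "Kmat Q x y = (\<Sum>z\<in>{z. z * x = y}. Q z)"

lemma Kmat_nonneg: "prob_dist Q \<Longrightarrow> Kmat Q x y \<ge> 0"
  unfolding Kmat_def prob_dist_def by (auto intro: sum_nonneg)

lemma Kmat_row: "prob_dist Q \<Longrightarrow> (\<Sum>y\<in>UNIV. Kmat Q x y) = 1"
proof -
  assume p: "prob_dist Q"
  have "(\<Sum>y\<in>UNIV. Kmat Q x y) = (\<Sum>y\<in>UNIV. \<Sum>z\<in>UNIV. if z * x = y then Q z else 0)"
    unfolding Kmat_def by (simp add: sum.If_cases)
  also have "\<dots> = (\<Sum>z\<in>UNIV. \<Sum>y\<in>UNIV. if z * x = y then Q z else 0)"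
    by (rule sum.swap)
  also have "\<dots> = (\<Sum>z\<in>UNIV. Q z)" by simp
  finally show ?thesis using p by (simp add: prob_dist_def)
qed

lemma trans_K: "trans_mat \<alpha> Q x y = \<alpha> / real CARD('a) + (1 - \<alpha>) * Kmat Q x y"
  for Q :: "'a::{ring_1,finite} \<Rightarrow> real"
  unfolding trans_mat_def Kmat_def by simp

lemma trans_row:
  assumes "prob_dist (Q :: 'a::{ring_1,finite} \<Rightarrow> real)"
  shows "(\<Sum>y\<in>UNIV. trans_mat \<alpha> Q x y) = 1"
proof -
  have "(\<Sum>y\<in>UNIV. trans_mat \<alpha> Q x y) = (\<Sum>y\<in>(UNIV::'a set). \<alpha> / real CARD('a)) + (1 - \<alpha>) * (\<Sum>y\<in>UNIV. Kmat Q x y)"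
    by (simp add: trans_K sum.distrib sum_distrib_left)
  also have "\<dots> = 1" using Kmat_row[OF assms] by simp
  finally show ?thesis .
qed

lemma matpow_row:
  assumes "prob_dist (Q :: 'a::{ring_1,finite} \<Rightarrow> real)"
  shows "(\<Sum>y\<in>UNIV. mat_pow (trans_mat \<alpha> Q) t x y) = 1"
proof (induction t)
  case 0
  then show ?case by simp
next
  case (Suc t)
  have "(\<Sum>y\<in>UNIV. mat_pow (trans_mat \<alpha> Q) (Suc t) x y)
     = (\<Sum>z\<in>UNIV. \<Sum>y\<in>UNIV. mat_pow (trans_mat \<alpha> Q) t x z * trans_mat \<alpha> Q z y)"
    by (simp only: mat_pow.simps) (rule sum.swap)
  also have "\<dots> = (\<Sum>z\<in>UNIV. mat_pow (trans_mat \<alpha> Q) t x z)"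
    by (simp add: sum_distrib_left[symmetric] trans_row[OF assms])
  finally show ?case using Suc by simp
qed

lemma contract:
  fixes d :: "'a::{ring_1,finite} \<Rightarrow> real"
  assumes p: "prob_dist Q" and a: "0 \<le> \<alpha>" "\<alpha> \<le> 1" and s: "(\<Sum>x\<in>UNIV. d x) = 0"
  shows "(\<Sum>y\<in>UNIV. \<bar>\<Sum>x\<in>UNIV. d x * trans_mat \<alpha> Q x y\<bar>) \<le> (1 - \<alpha>) * (\<Sum>x\<in>UNIV. \<bar>d x\<bar>)"
proof -
  have eq: "(\<Sum>x\<in>UNIV. d x * trans_mat \<alpha> Q x y) = (1 - \<alpha>) * (\<Sum>x\<in>UNIV. d x * Kmat Q x y)" for y
  proof -
    have "(\<Sum>x\<in>UNIV. d x * trans_mat \<alpha> Q x y) = (\<alpha> / real CARD('a)) * (\<Sum>x\<in>UNIV. d x) + (1 - \<alpha>) * (\<Sum>x\<in>UNIV. d x * Kmat Q x y)"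
    proof -
      have "(\<Sum>x\<in>UNIV. d x * trans_mat \<alpha> Q x y) = (\<Sum>x\<in>UNIV. (\<alpha> / real CARD('a)) * d x + (1 - \<alpha>) * (d x * Kmat Q x y))"
        by (intro sum.cong) (simp_all add: trans_K algebra_simps)
      also have "\<dots> = (\<alpha> / real CARD('a)) * (\<Sum>x\<in>UNIV. d x) + (1 - \<alpha>) * (\<Sum>x\<in>UNIV. d x * Kmat Q x y)"
        by (simp add: sum.distrib sum_distrib_left)
      finally show ?thesis .
    qed
    then show ?thesis using s by simp
  qed
  have le: "\<bar>\<Sum>x\<in>UNIV. d x * Kmat Q x y\<bar> \<le> (\<Sum>x\<in>UNIV. \<bar>d x\<bar> * Kmat Q x y)" for y
  proof -
    have "\<bar>\<Sum>x\<in>UNIV. d x * Kmat Q x y\<bar> \<le> (\<Sum>x\<in>UNIV. \<bar>d x * Kmat Q x y\<bar>)" by (rule sum_abs)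
    also have "\<dots> = (\<Sum>x\<in>UNIV. \<bar>d x\<bar> * Kmat Q x y)"
      using Kmat_nonneg[OF p] by (simp add: abs_mult)
    finally show ?thesis .
  qed
  have "(\<Sum>y\<in>UNIV. \<bar>\<Sum>x\<in>UNIV. d x * trans_mat \<alpha> Q x y\<bar>) = (1 - \<alpha>) * (\<Sum>y\<in>UNIV. \<bar>\<Sum>x\<in>UNIV. d x * Kmat Q x y\<bar>)"
    unfolding eq abs_mult sum_distrib_left[symmetric] using a by simp
  also have "\<dots> \<le> (1 - \<alpha>) * (\<Sum>y\<in>UNIV. \<Sum>x\<in>UNIV. \<bar>d x\<bar> * Kmat Q x y)"
    using a by (intro mult_left_mono sum_mono le) auto
  also have "(\<Sum>y\<in>UNIV. \<Sum>x\<in>UNIV. \<bar>d x\<bar> * Kmat Q x y) = (\<Sum>x\<in>UNIV. \<bar>d x\<bar> * (\<Sum>y\<in>UNIV. Kmat Q x y))"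
    by (subst sum.swap) (simp add: sum_distrib_left)
  also have "\<dots> = (\<Sum>x\<in>UNIV. \<bar>d x\<bar>)" using Kmat_row[OF p] by simp
  finally show ?thesis .
qed

lemma tv_bound:
  fixes Q :: "'a::{ring_1,finite} \<Rightarrow> real"
  assumes p: "prob_dist Q" and a: "0 \<le> \<alpha>" "\<alpha> \<le> 1" and st: "stationary (trans_mat \<alpha> Q) \<pi>"
  shows "(\<Sum>y\<in>UNIV. \<bar>mat_pow (trans_mat \<alpha> Q) t x y - \<pi> y\<bar>) \<le> (1 - \<alpha>) ^ t * 2"
proof (induction t)
  case 0
  have pd: "prob_dist \<pi>" and "\<forall>y. (\<Sum>x\<in>UNIV. \<pi> x * trans_mat \<alpha> Q x y) = \<pi> y"
    using st by (auto simp: stationary_def)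
  have "(\<Sum>y\<in>UNIV. \<bar>mat_pow (trans_mat \<alpha> Q) 0 x y - \<pi> y\<bar>) \<le> (\<Sum>y\<in>UNIV. (if x = y then 1 else 0) + \<pi> y)"
  proof (intro sum_mono)
    fix y
    have "\<pi> y \<ge> 0" using pd by (simp add: prob_dist_def)
    then show "\<bar>mat_pow (trans_mat \<alpha> Q) 0 x y - \<pi> y\<bar> \<le> (if x = y then 1 else 0) + \<pi> y" by auto
  qed
  also have "\<dots> = 2" using pd by (simp add: sum.distrib prob_dist_def)
  finally show ?case by simp
next
  case (Suc t)
  let ?m = "mat_pow (trans_mat \<alpha> Q) t x"
  have pd: "prob_dist \<pi>" and stt: "\<And>y. (\<Sum>x\<in>UNIV. \<pi> x * trans_mat \<alpha> Q x y) = \<pi> y"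
    using st by (auto simp: stationary_def)
  have s: "(\<Sum>z\<in>UNIV. ?m z - \<pi> z) = 0"
    using matpow_row[OF p] pd by (simp add: sum_subtractf prob_dist_def)
  have e: "mat_pow (trans_mat \<alpha> Q) (Suc t) x y - \<pi> y = (\<Sum>z\<in>UNIV. (?m z - \<pi> z) * trans_mat \<alpha> Q z y)" for y
    using stt[of y] by (simp add: left_diff_distrib sum_subtractf)
  have "(\<Sum>y\<in>UNIV. \<bar>mat_pow (trans_mat \<alpha> Q) (Suc t) x y - \<pi> y\<bar>) \<le> (1 - \<alpha>) * (\<Sum>z\<in>UNIV. \<bar>?m z - \<pi> z\<bar>)"
    unfolding e by (rule contract[OF p a s])
  also have "\<dots> \<le> (1 - \<alpha>) * ((1 - \<alpha>) ^ t * 2)"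
    using Suc a by (intro mult_left_mono) auto
  finally show ?case by simp
qed

lemma dist_bound:
  fixes Q :: "'a::{ring_1,finite} \<Rightarrow> real"
  assumes p: "prob_dist Q" and a: "0 \<le> \<alpha>" "\<alpha> \<le> 1" and st: "stationary (trans_mat \<alpha> Q) \<pi>"
  shows "dist_t (trans_mat \<alpha> Q) \<pi> t \<le> (1 - \<alpha>) ^ t"
  unfolding dist_t_def
proof (subst Max_le_iff)
  show "finite (range (\<lambda>x. tv_dist (mat_pow (trans_mat \<alpha> Q) t x) \<pi>))" by simp
  show "range (\<lambda>x. tv_dist (mat_pow (trans_mat \<alpha> Q) t x) \<pi>) \<noteq> {}" by simp
  show "\<forall>a\<in>range (\<lambda>x. tv_dist (mat_pow (trans_mat \<alpha> Q) t x) \<pi>). a \<le> (1 - \<alpha>) ^ t"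
    using tv_bound[OF p a st] by (auto simp: tv_dist_def)
qed

theorem theorem4p1:
  fixes \<alpha> \<epsilon> :: real and Q :: "'a::{ring_1,finite} \<Rightarrow> real" and \<pi> :: "'a \<Rightarrow> real"
  assumes "0 < \<alpha>" and "\<alpha> < 1"
    and "prob_dist Q"
    and "\<And>a b. similar a b \<Longrightarrow> Q a = Q b"
    and "stationary (trans_mat \<alpha> Q) \<pi>"
    and "0 < \<epsilon>" and "\<epsilon> < 1/2"
  shows "real (t_mix (trans_mat \<alpha> Q) \<pi> \<epsilon>) \<le> ln \<epsilon> / ln (1 - \<alpha>) + 1"
proof -
  define r where "r = ln \<epsilon> / ln (1 - \<alpha>)"
  define T where "T = nat \<lceil>r\<rceil>"
  have l1: "ln (1 - \<alpha>) < 0" using assms by simp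
  have l2: "ln \<epsilon> < 0" using assms by simp
  have r0: "r \<ge> 0" unfolding r_def using l1 l2 by (simp add: divide_nonpos_neg)
  have Tr: "real T \<ge> r" "real T \<le> r + 1" unfolding T_def using r0 by linarith+
  have "real T * ln (1 - \<alpha>) \<le> r * ln (1 - \<alpha>)"
    using Tr l1 by (intro mult_right_mono_neg) auto
  also have "\<dots> = ln \<epsilon>" unfolding r_def using l1 by simp
  finally have "ln ((1 - \<alpha>) ^ T) \<le> ln \<epsilon>" using assms by (simp add: ln_realpow)
  then have pw: "(1 - \<alpha>) ^ T \<le> \<epsilon>" using assms by simp
  have "dist_t (trans_mat \<alpha> Q) \<pi> T \<le> \<epsilon>"
    using dist_bound[OF assms(3) _ _ assms(5), of T] assms pw by force
  then have "t_mix (trans_mat \<alpha> Q) \<pi> \<epsilon> \<le> T" unfolding t_mix_def by (rule Least_le)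
  then show ?thesis using Tr unfolding r_def by linarith
qed

end
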